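(* Let $(\lambda_n)_{n\ge 1}$ be a sequence of positive real numbers and put $\Lambda_n=\sum_{i=1}^n\lambda_i$. Suppose that \[ M=\sup_{n\ge 1}\sum_{k=1}^{n}\frac{\lambda_k}{\Lambda_n}\Big(\frac{\Lambda_{k+1}}{\lambda_{k+1}}-\frac{\Lambda_k}{\lambda_k}\Big)<+\infty . \] Then for every sequence $(a_n)_{n\ge1}$ of non-negative real numbers with $\sum_{n=1}^\infty a_n<\infty$, \[ \sum_{n=1}^{\infty}\prod_{k=1}^{n}a_k^{\lambda_k/\Lambda_n}\le e^{M}\sum_{n=1}^{\infty}a_n . \] *)

theory Defs
  imports "HOL-Analysis.Analysis"
begin

definition Lam :: "(nat \<Rightarrow> real) \<Rightarrow> nat \<Rightarrow> real" where
  "Lam lam n = (\<Sum>i=1..n. lam i)"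

definition Mterm :: "(nat \<Rightarrow> real) \<Rightarrow> nat \<Rightarrow> real" where
  "Mterm lam n = (\<Sum>k=1..n. lam k / Lam lam n *
      (Lam lam (k+1) / lam (k+1) - Lam lam k / lam k))"

end

theory Submission imports Defs begin

lemma wamgm:
  fixes w x :: "nat \<Rightarrow> real"
  assumes fin: "finite S" and ne: "S \<noteq> {}" and wpos: "\<And>i. i\<in>S \<Longrightarrow> w i > 0"
    and w1: "sum w S = 1" and xnn: "\<And>i. i\<in>S \<Longrightarrow> x i \<ge> 0"
  shows "(\<Prod>i\<in>S. x i powr w i) \<le> (\<Sum>i\<in>S. w i * x i)"
proof (cases "\<exists>i\<in>S. x i = 0")
  case True
  then have "(\<Prod>i\<in>S. x i powr w i) = 0" using fin by (auto intro: prod_zero)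
  moreover have "(\<Sum>i\<in>S. w i * x i) \<ge> 0" using wpos xnn by (intro sum_nonneg mult_nonneg_nonneg) (auto intro: less_imp_le)
  ultimately show ?thesis by simp
next
  case False
  then have xpos: "\<And>i. i\<in>S \<Longrightarrow> x i > 0" using xnn by force
  have "ln (\<Sum>i\<in>S. w i *\<^sub>R x i) \<ge> (\<Sum>i\<in>S. w i * ln (x i))"
    by (rule concave_on_sum[OF fin ne ln_concave w1]) (auto simp: wpos less_imp_le xpos)
  then have 1: "(\<Sum>i\<in>S. w i * ln (x i)) \<le> ln (\<Sum>i\<in>S. w i * x i)" by simp
  have pos: "(\<Sum>i\<in>S. w i * x i) > 0" using fin ne wpos xpos by (intro sum_pos) auto
  have "(\<Prod>i\<in>S. x i powr w i) = (\<Prod>i\<in>S. exp (w i * ln (x i)))"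
  proof (intro prod.cong refl)
    fix i assume "i\<in>S"
    then have "x i > 0" by (rule xpos)
    then show "x i powr w i = exp (w i * ln (x i))" by (simp add: powr_def)
  qed
  also have "\<dots> = exp (\<Sum>i\<in>S. w i * ln (x i))" by (simp add: exp_sum fin)
  also have "\<dots> \<le> exp (ln (\<Sum>i\<in>S. w i * x i))" using 1 by simp
  also have "\<dots> = (\<Sum>i\<in>S. w i * x i)" using pos by simp
  finally show ?thesis .
qed

lemma Lam_Suc: "Lam lam (Suc n) = Lam lam n + lam (Suc n)"
  by (simp add: Lam_def)

lemma Lam_0: "Lam lam 0 = 0" by (simp add: Lam_def)

theorem corollary2p1:
  fixes lam a :: "nat \<Rightarrow> real" and M :: real
  assumes lam_pos: "\<And>n. n \<ge> 1 \<Longrightarrow> lam n > 0"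
    and bdd: "bdd_above (Mterm lam ` {1..})"
    and M_def: "M = (SUP n\<in>{1..}. Mterm lam n)"
    and a_nonneg: "\<And>n. n \<ge> 1 \<Longrightarrow> a n \<ge> 0"
    and a_summable: "summable (\<lambda>n. a (Suc n))"
  shows "summable (\<lambda>n. \<Prod>k=1..Suc n. a k powr (lam k / Lam lam (Suc n)))
    \<and> (\<Sum>n. \<Prod>k=1..Suc n. a k powr (lam k / Lam lam (Suc n)))
        \<le> exp M * (\<Sum>n. a (Suc n))"
proof -
  define L where "L = Lam lam"
  define b where "b k = L k / lam k" for k
  define G where "G n = (\<Prod>k=1..Suc n. a k powr (lam k / Lam lam (Suc n)))" for n
  have LS: "L (Suc n) = L n + lam (Suc n)" for n by (simp add: L_def Lam_Suc)
  have L0: "L 0 = 0" by (simp add: L_def Lam_0)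
  have Lnn: "L n \<ge> 0" for n
  proof (induction n)
    case (Suc n) then show ?case using lam_pos[of "Suc n"] by (simp add: LS)
  qed (simp add: L0)
  have Lpos: "L n > 0" if "n \<ge> 1" for n
  proof (cases n)
    case (Suc m) then show ?thesis using lam_pos[of "Suc m"] Lnn[of m] by (simp add: LS)
  qed (use that in simp)
  have bpos: "b n > 0" if "n \<ge> 1" for n using that Lpos lam_pos by (simp add: b_def)
  have D: "L n * ln (b (Suc n)) - (\<Sum>k=1..n. lam k * ln (b k)) \<le> (\<Sum>k=1..n. lam k * (b (Suc k) - b k))" for n
  proof (induction n)
    case 0
    then show ?case by (simp add: L0)
  next
    case (Suc n)
    have b1: "b (Suc n) > 0" "b (Suc (Suc n)) > 0" using bpos by auto
    have l1: "lam (Suc n) > 0" using lam_pos by auto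
    have L1: "L (Suc n) > 0" using Lpos by auto
    have "ln (b (Suc (Suc n))) - ln (b (Suc n)) = ln (b (Suc (Suc n)) / b (Suc n))"
      using b1 by (simp add: ln_div)
    also have "\<dots> \<le> b (Suc (Suc n)) / b (Suc n) - 1"
      using b1 by (intro ln_le_minus_one) simp
    finally have "L (Suc n) * (ln (b (Suc (Suc n))) - ln (b (Suc n))) \<le> L (Suc n) * (b (Suc (Suc n)) / b (Suc n) - 1)"
      using L1 by (intro mult_left_mono) auto
    also have "\<dots> = lam (Suc n) * (b (Suc (Suc n)) - b (Suc n))"
      using L1 l1 by (simp add: b_def field_simps)
    finally have step: "L (Suc n) * (ln (b (Suc (Suc n))) - ln (b (Suc n))) \<le> lam (Suc n) * (b (Suc (Suc n)) - b (Suc n))" .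
    show ?case using Suc.IH step by (simp add: LS algebra_simps)
  qed
  have Mb: "Mterm lam n \<le> M" if "n \<ge> 1" for n
    unfolding M_def using bdd that by (intro cSUP_upper) auto
  have key: "(\<Sum>k=1..n. (lam k / L n) * ln (b k)) \<ge> ln (b (Suc n)) - M" if n1: "n \<ge> 1" for n
  proof -
    have "Mterm lam n = (\<Sum>k=1..n. lam k * (b (Suc k) - b k)) / L n"
      by (simp add: Mterm_def L_def b_def sum_divide_distrib)
    then have "(\<Sum>k=1..n. lam k * (b (Suc k) - b k)) \<le> M * L n"
      using Mb[OF n1] Lpos[OF n1] by (simp add: divide_le_eq)
    with D[of n] have "L n * ln (b (Suc n)) - (\<Sum>k=1..n. lam k * ln (b k)) \<le> M * L n" by linarith
    then have "ln (b (Suc n)) - M \<le> (\<Sum>k=1..n. lam k * ln (b k)) / L n"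
      using Lpos[OF n1] by (simp add: le_divide_eq algebra_simps)
    also have "\<dots> = (\<Sum>k=1..n. (lam k / L n) * ln (b k))"
      by (simp add: sum_divide_distrib)
    finally show ?thesis .
  qed
  have Gb: "G n \<le> exp M * ((\<Sum>k=1..Suc n. L k * a k) * (1 / L (Suc n) - 1 / L (Suc (Suc n))))" for n
  proof -
    define m where "m = Suc n"
    have m1: "m \<ge> 1" by (simp add: m_def)
    define w where "w k = lam k / L m" for k
    have wpos: "w k > 0" if "k \<in> {1..m}" for k using that lam_pos Lpos[OF m1] by (simp add: w_def)
    have w1: "sum w {1..m} = 1" using Lpos[OF m1] by (simp add: w_def L_def Lam_def sum_divide_distrib[symmetric])
    define P where "P = (\<Prod>k=1..m. b k powr w k)"
    have "P = (\<Prod>k=1..m. exp (w k * ln (b k)))"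
      unfolding P_def using bpos by (intro prod.cong) (auto simp: powr_def, metis less_irrefl)
    also have "\<dots> = exp (\<Sum>k=1..m. w k * ln (b k))" by (simp add: exp_sum)
    finally have Pe: "P = exp (\<Sum>k=1..m. w k * ln (b k))" .
    have "exp (ln (b (Suc m)) - M) \<le> P"
      unfolding Pe w_def using key[OF m1] by simp
    then have Pge: "P \<ge> b (Suc m) / exp M"
      using bpos[of "Suc m"] by (simp add: exp_diff)
    have Ppos: "P > 0" unfolding Pe by simp
    have "P * G n = (\<Prod>k=1..m. (b k * a k) powr w k)"
      unfolding P_def G_def m_def[symmetric] w_def L_def prod.distrib[symmetric]
      using bpos a_nonneg by (intro prod.cong) (auto simp: powr_mult less_imp_le)
    also have "\<dots> \<le> (\<Sum>k=1..m. w k * (b k * a k))"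
      by (rule wamgm) (use wpos w1 bpos a_nonneg m1 in \<open>auto intro: mult_nonneg_nonneg less_imp_le\<close>)
    also have "\<dots> = (\<Sum>k=1..m. L k * a k) / L m"
      unfolding sum_divide_distrib using lam_pos by (intro sum.cong) (auto simp: w_def b_def, metis less_irrefl)
    finally have PG: "P * G n \<le> (\<Sum>k=1..m. L k * a k) / L m" .
    have Gnn: "G n \<ge> 0" unfolding G_def by (intro prod_nonneg) auto
    have "b (Suc m) / exp M * G n \<le> P * G n" using Pge Gnn by (intro mult_right_mono) auto
    with PG have "b (Suc m) / exp M * G n \<le> (\<Sum>k=1..m. L k * a k) / L m" by linarith
    then have "G n \<le> exp M * ((\<Sum>k=1..m. L k * a k) / L m) / b (Suc m)"
      using bpos[of "Suc m"] Lpos[OF m1] by (simp add: field_simps)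
    also have "\<dots> = exp M * ((\<Sum>k=1..m. L k * a k) * (1 / L m - 1 / L (Suc m)))"
      using Lpos[OF m1] Lpos[of "Suc m"] lam_pos[of "Suc m"] by (simp add: b_def LS field_simps)
    finally show ?thesis by (simp add: m_def)
  qed
  define A where "A N = (\<Sum>k=1..N. L k * a k)" for N
  define T where "T n = A (Suc n) * (1 / L (Suc n) - 1 / L (Suc (Suc n)))" for n
  have tel: "(\<Sum>n<N. T n) + A N / L (Suc N) = (\<Sum>n<N. a (Suc n))" for N
  proof (induction N)
    case 0 then show ?case by (simp add: A_def)
  next
    case (Suc N)
    have AS: "A (Suc N) = A N + L (Suc N) * a (Suc N)" by (simp add: A_def)
    have "L (Suc N) > 0" using Lpos by auto
    then show ?case using Suc.IH by (simp add: T_def AS field_simps)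
  qed
  have Tsum: "(\<Sum>n<N. T n) \<le> (\<Sum>n<N. a (Suc n))" for N
  proof -
    have "A N \<ge> 0" unfolding A_def using Lnn a_nonneg by (intro sum_nonneg mult_nonneg_nonneg) auto
    then have "A N / L (Suc N) \<ge> 0" using Lnn by simp
    then show ?thesis using tel[of N] by linarith
  qed
  have Gnn: "G n \<ge> 0" for n unfolding G_def by (intro prod_nonneg) auto
  have bound: "(\<Sum>n<N. G n) \<le> exp M * (\<Sum>n. a (Suc n))" for N
  proof -
    have "(\<Sum>n<N. G n) \<le> (\<Sum>n<N. exp M * T n)"
      using Gb by (intro sum_mono) (simp add: T_def A_def)
    also have "\<dots> = exp M * (\<Sum>n<N. T n)" by (simp add: sum_distrib_left)
    also have "\<dots> \<le> exp M * (\<Sum>n<N. a (Suc n))" using Tsum by simp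
    also have "\<dots> \<le> exp M * (\<Sum>n. a (Suc n))"
      using a_summable a_nonneg by (intro mult_left_mono sum_le_suminf) auto
    finally show ?thesis .
  qed
  have sG: "summable G" using Gnn bound by (intro summableI_nonneg_bounded) auto
  have "suminf G \<le> exp M * (\<Sum>n. a (Suc n))" using sG bound by (intro suminf_le_const) auto
  with sG show ?thesis unfolding G_def by simp
qed

end
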